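(* Let $K$ be a binomial principal ideal domain and $G$ a finitely generated regular nilpotent $K$-group. Then $G\cong H\times G_0$ for any addition $G_0$ and any foundation $H$ (not necessarily associated with each other); consequently all foundations of $G$ are isomorphic to each other and all additions of $G$ are isomorphic to each other.
   Context: $K$ binomial: a characteristic-zero domain with unique binomial coefficients $\binom{k}{n}\in K$; $K$-groups are Hall's nilpotent groups with exponents in $K$. $Is(N)=\{x\in G: x^\alpha\in N\text{ for some }0\ne\alpha\in K\}$; $I(G)=Is(G')\cap Z(G)$. An addition is a $K$-subgroup $G_0\le Z(G)$ with $Z(G)=G_0\oplus I(G)$. $G$ is regular if $G=H\times G_0$ for an addition $G_0$ and a $K$-subgroup $H$ with $Is(H')\ge Z(H)$; for a regular group, such a subgroup $H$ (identified with $G/G_0$) is also called a foundation. *)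

theory Defs
  imports "HOL-Algebra.Algebra"
begin

definition binomial_domain :: "('k::{idom,ring_char_0}) itself \<Rightarrow> bool" where
  "binomial_domain _ \<longleftrightarrow>
     (\<forall>(k::'k) (n::nat). \<exists>b. of_nat (fact n) * b = (\<Prod>i<n. k - of_nat i))"

text \<open>The (unique, by characteristic zero) binomial coefficient k choose n in K.\<close>
definition kbin :: "'k::{idom,ring_char_0} \<Rightarrow> nat \<Rightarrow> 'k" where
  "kbin k n = (THE b. of_nat (fact n) * b = (\<Prod>i<n. k - of_nat i))"

definition ring_ideal :: "'k::idom set \<Rightarrow> bool" where
  "ring_ideal I \<longleftrightarrow> 0 \<in> I \<and> (\<forall>x\<in>I. \<forall>y\<in>I. x + y \<in> I) \<and> (\<forall>x\<in>I. \<forall>r. r * x \<in> I)"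

definition pid :: "('k::idom) itself \<Rightarrow> bool" where
  "pid _ \<longleftrightarrow> (\<forall>I::'k set. ring_ideal I \<longrightarrow> (\<exists>a. I = {a * x | x. True}))"

definition lprod :: "('a, 'b) monoid_scheme \<Rightarrow> 'a list \<Rightarrow> 'a" where
  "lprod G xs = foldr (\<lambda>x acc. x \<otimes>\<^bsub>G\<^esub> acc) xs \<one>\<^bsub>G\<^esub>"

fun lcs :: "('a, 'b) monoid_scheme \<Rightarrow> nat \<Rightarrow> 'a set" where
  "lcs G 0 = carrier G"
| "lcs G (Suc n) = generate G (\<Union>a\<in>lcs G n. \<Union>b\<in>carrier G.
       {a \<otimes>\<^bsub>G\<^esub> b \<otimes>\<^bsub>G\<^esub> inv\<^bsub>G\<^esub> a \<otimes>\<^bsub>G\<^esub> inv\<^bsub>G\<^esub> b})"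

definition nilpotent :: "('a, 'b) monoid_scheme \<Rightarrow> bool" where
  "nilpotent G \<longleftrightarrow> (\<exists>c. lcs G c = {\<one>\<^bsub>G\<^esub>})"

definition nilclass :: "('a, 'b) monoid_scheme \<Rightarrow> nat" where
  "nilclass G = (LEAST c. lcs G c = {\<one>\<^bsub>G\<^esub>})"

text \<open>Petresco words: petresco_list G xs n = [tau_1(xs), ..., tau_n(xs)], determined by
  x_1^n ... x_m^n = tau_1^(n choose 1) tau_2^(n choose 2) ... tau_n^(n choose n).\<close>
fun petresco_list :: "('a, 'b) monoid_scheme \<Rightarrow> 'a list \<Rightarrow> nat \<Rightarrow> 'a list" where
  "petresco_list G xs 0 = []"
| "petresco_list G xs (Suc n) =
     (let ts = petresco_list G xs n in
      ts @ [inv\<^bsub>G\<^esub> (lprod G (map (\<lambda>i. (ts ! i) [^]\<^bsub>G\<^esub> (Suc n choose Suc i)) [0..<n]))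
            \<otimes>\<^bsub>G\<^esub> lprod G (map (\<lambda>x. x [^]\<^bsub>G\<^esub> (Suc n)) xs)])"

definition kgroup :: "('a, 'b) monoid_scheme \<Rightarrow> ('a \<Rightarrow> 'k::{idom,ring_char_0} \<Rightarrow> 'a) \<Rightarrow> bool" where
  "kgroup G pw \<longleftrightarrow> group G \<and> nilpotent G \<and>
     (\<forall>x\<in>carrier G. \<forall>a. pw x a \<in> carrier G) \<and>
     (\<forall>x\<in>carrier G. pw x 1 = x) \<and>
     (\<forall>x\<in>carrier G. \<forall>a b. pw x a \<otimes>\<^bsub>G\<^esub> pw x b = pw x (a + b)) \<and>
     (\<forall>x\<in>carrier G. \<forall>a b. pw (pw x a) b = pw x (a * b)) \<and>
     (\<forall>x\<in>carrier G. \<forall>y\<in>carrier G. \<forall>a.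
        pw (inv\<^bsub>G\<^esub> y \<otimes>\<^bsub>G\<^esub> x \<otimes>\<^bsub>G\<^esub> y) a = inv\<^bsub>G\<^esub> y \<otimes>\<^bsub>G\<^esub> pw x a \<otimes>\<^bsub>G\<^esub> y) \<and>
     (\<forall>xs a. set xs \<subseteq> carrier G \<longrightarrow>
        lprod G (map (\<lambda>x. pw x a) xs) =
        lprod G (map (\<lambda>i. pw (petresco_list G xs (nilclass G) ! i) (kbin a (Suc i)))
                     [0..<nilclass G]))"

definition ksubgroup :: "('a, 'b) monoid_scheme \<Rightarrow> ('a \<Rightarrow> 'k \<Rightarrow> 'a) \<Rightarrow> 'a set \<Rightarrow> bool" where
  "ksubgroup G pw S \<longleftrightarrow> subgroup S G \<and> (\<forall>x\<in>S. \<forall>a. pw x a \<in> S)"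

definition kgen :: "('a, 'b) monoid_scheme \<Rightarrow> ('a \<Rightarrow> 'k \<Rightarrow> 'a) \<Rightarrow> 'a set \<Rightarrow> 'a set" where
  "kgen G pw S = \<Inter>{T. ksubgroup G pw T \<and> S \<subseteq> T}"

definition fin_gen_kgroup :: "('a, 'b) monoid_scheme \<Rightarrow> ('a \<Rightarrow> 'k \<Rightarrow> 'a) \<Rightarrow> bool" where
  "fin_gen_kgroup G pw \<longleftrightarrow> (\<exists>S. finite S \<and> S \<subseteq> carrier G \<and> kgen G pw S = carrier G)"

definition kderived :: "('a, 'b) monoid_scheme \<Rightarrow> ('a \<Rightarrow> 'k \<Rightarrow> 'a) \<Rightarrow> 'a set \<Rightarrow> 'a set" where
  "kderived G pw H = kgen G pw (derived_set G H)"

definition isol :: "('a, 'b) monoid_scheme \<Rightarrow> ('a \<Rightarrow> 'k::zero \<Rightarrow> 'a) \<Rightarrow> 'a set \<Rightarrow> 'a set \<Rightarrow> 'a set" where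
  "isol G pw H N = {x\<in>H. \<exists>a. a \<noteq> 0 \<and> pw x a \<in> N}"

definition zcenter :: "('a, 'b) monoid_scheme \<Rightarrow> 'a set \<Rightarrow> 'a set" where
  "zcenter G H = {x\<in>H. \<forall>y\<in>H. x \<otimes>\<^bsub>G\<^esub> y = y \<otimes>\<^bsub>G\<^esub> x}"

definition Icomp :: "('a, 'b) monoid_scheme \<Rightarrow> ('a \<Rightarrow> 'k::zero \<Rightarrow> 'a) \<Rightarrow> 'a set" where
  "Icomp G pw = isol G pw (carrier G) (kderived G pw (carrier G)) \<inter> zcenter G (carrier G)"

definition int_dprod :: "('a, 'b) monoid_scheme \<Rightarrow> 'a set \<Rightarrow> 'a set \<Rightarrow> 'a set \<Rightarrow> bool" where
  "int_dprod G A B C \<longleftrightarrow> A \<inter> B = {\<one>\<^bsub>G\<^esub>} \<and>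
     (\<forall>a\<in>A. \<forall>b\<in>B. a \<otimes>\<^bsub>G\<^esub> b = b \<otimes>\<^bsub>G\<^esub> a) \<and>
     {a \<otimes>\<^bsub>G\<^esub> b | a b. a \<in> A \<and> b \<in> B} = C"

definition addition :: "('a, 'b) monoid_scheme \<Rightarrow> ('a \<Rightarrow> 'k::zero \<Rightarrow> 'a) \<Rightarrow> 'a set \<Rightarrow> bool" where
  "addition G pw G0 \<longleftrightarrow> ksubgroup G pw G0 \<and> G0 \<subseteq> zcenter G (carrier G) \<and>
     int_dprod G G0 (Icomp G pw) (zcenter G (carrier G))"

definition foundation_cond :: "('a, 'b) monoid_scheme \<Rightarrow> ('a \<Rightarrow> 'k::zero \<Rightarrow> 'a) \<Rightarrow> 'a set \<Rightarrow> bool" where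
  "foundation_cond G pw H \<longleftrightarrow> ksubgroup G pw H \<and>
     zcenter G H \<subseteq> isol G pw H (kderived G pw H)"

definition regular :: "('a, 'b) monoid_scheme \<Rightarrow> ('a \<Rightarrow> 'k::zero \<Rightarrow> 'a) \<Rightarrow> bool" where
  "regular G pw \<longleftrightarrow> (\<exists>H G0. addition G pw G0 \<and> foundation_cond G pw H \<and>
     int_dprod G H G0 (carrier G))"

definition foundation :: "('a, 'b) monoid_scheme \<Rightarrow> ('a \<Rightarrow> 'k::zero \<Rightarrow> 'a) \<Rightarrow> 'a set \<Rightarrow> bool" where
  "foundation G pw H \<longleftrightarrow> foundation_cond G pw H \<and>
     (\<exists>G0. addition G pw G0 \<and> int_dprod G H G0 (carrier G))"

definition kiso :: "('a, 'b) monoid_scheme \<Rightarrow> ('a \<Rightarrow> 'k \<Rightarrow> 'a) \<Rightarrow>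
                    ('c, 'd) monoid_scheme \<Rightarrow> ('c \<Rightarrow> 'k \<Rightarrow> 'c) \<Rightarrow> bool" where
  "kiso G p H q \<longleftrightarrow> (\<exists>f. f \<in> iso G H \<and> (\<forall>x\<in>carrier G. \<forall>a. f (p x a) = q (f x) a))"

definition dpow :: "('a \<Rightarrow> 'k \<Rightarrow> 'a) \<Rightarrow> ('c \<Rightarrow> 'k \<Rightarrow> 'c) \<Rightarrow> ('a \<times> 'c) \<Rightarrow> 'k \<Rightarrow> ('a \<times> 'c)" where
  "dpow p q xy a = (p (fst xy) a, q (snd xy) a)"

end

theory Submission
  imports Defs
begin

context fixes G :: "('a,'b) monoid_scheme" (structure) assumes gg: "group G" begin
interpretation group G by (rule gg)
lemma Zg_mult: "x \<in> zcenter G (carrier G) \<Longrightarrow> y \<in> zcenter G (carrier G) \<Longrightarrow> x \<otimes> y \<in> zcenter G (carrier G)"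
proof -
  assume xZ: "x \<in> zcenter G (carrier G)" and yZ: "y \<in> zcenter G (carrier G)"
  have x: "x \<in> carrier G" and y: "y \<in> carrier G" using xZ yZ unfolding zcenter_def by auto
  have "x \<otimes> y \<otimes> z = z \<otimes> (x \<otimes> y)" if z: "z \<in> carrier G" for z
  proof -
    have yz: "y \<otimes> z = z \<otimes> y" using yZ z unfolding zcenter_def by blast
    have xz: "x \<otimes> z = z \<otimes> x" using xZ z unfolding zcenter_def by blast
    have "x \<otimes> y \<otimes> z = x \<otimes> (z \<otimes> y)" using x y z yz by (simp add: m_assoc)
    also have "\<dots> = (x \<otimes> z) \<otimes> y" using x y z by (simp add: m_assoc)
    also have "\<dots> = z \<otimes> (x \<otimes> y)" using x y z xz by (simp add: m_assoc)
    finally show ?thesis .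
  qed
  then show ?thesis using x y unfolding zcenter_def by auto
qed
lemma Zg_inv: "x \<in> zcenter G (carrier G) \<Longrightarrow> inv x \<in> zcenter G (carrier G)"
proof -
  assume xZ: "x \<in> zcenter G (carrier G)"
  have x: "x \<in> carrier G" using xZ unfolding zcenter_def by auto
  have "inv x \<otimes> z = z \<otimes> inv x" if z: "z \<in> carrier G" for z
  proof -
    have xz: "x \<otimes> z = z \<otimes> x" using xZ z unfolding zcenter_def by blast
    have "inv x \<otimes> z = inv x \<otimes> z \<otimes> (x \<otimes> inv x)" using x z by (simp only: r_inv r_one m_closed inv_closed)
    also have "\<dots> = inv x \<otimes> (z \<otimes> x) \<otimes> inv x" using x z by (simp only: m_assoc inv_closed m_closed)
    also have "\<dots> = inv x \<otimes> (x \<otimes> z) \<otimes> inv x" using xz by simp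
    also have "\<dots> = z \<otimes> inv x" using x z by (simp add: m_assoc[symmetric])
    finally show ?thesis .
  qed
  then show ?thesis using x unfolding zcenter_def by auto
qed
end 


lemma lprod_ones: "\<forall>x\<in>set xs. x = \<one>\<^bsub>G\<^esub> \<Longrightarrow> monoid G \<Longrightarrow> lprod G xs = \<one>\<^bsub>G\<^esub>"
  by (induction xs) (auto simp: lprod_def monoid.l_one)

lemma lprod_first:
  assumes "monoid G" "0 < n" "f 0 \<in> carrier G" "\<forall>i\<in>{1..<n}. f i = \<one>\<^bsub>G\<^esub>"
  shows "lprod G (map f [0..<n]) = f 0"
proof -
  have "[0..<n] = 0 # [1..<n]" using assms(2) by (simp add: upt_conv_Cons)
  moreover have "lprod G (map f [1..<n]) = \<one>\<^bsub>G\<^esub>"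
    using assms by (intro lprod_ones) auto
  ultimately show ?thesis using assms by (simp add: lprod_def monoid.r_one)
qed

lemma kbin_1: "kbin (a::'k::{idom,ring_char_0}) (Suc 0) = a"
  unfolding kbin_def by simp

lemma petresco_comm:
  fixes G (structure)
  assumes "group G" "x \<in> carrier G" "y \<in> carrier G" "x \<otimes>\<^bsub>G\<^esub> y = y \<otimes>\<^bsub>G\<^esub> x" "n \<ge> 1"
  shows "petresco_list G [x,y] n = (x \<otimes>\<^bsub>G\<^esub> y) # replicate (n-1) \<one>\<^bsub>G\<^esub>"
  using assms(5)
proof (induction n rule: dec_induct)
  case base
  interpret group G by fact
  show ?case using assms by (simp add: lprod_def)
next
  case (step n)
  interpret group G by fact
  let ?ts = "petresco_list G [x,y] n"
  have len: "length ?ts = n" using step by simp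
  have "lprod G (map (\<lambda>i. (?ts ! i) [^]\<^bsub>G\<^esub> (Suc n choose Suc i)) [0..<n])
      = (?ts ! 0) [^] (Suc n choose Suc 0)"
    apply (rule lprod_first)
    using step assms by (auto simp: nth_Cons')
  also have "\<dots> = (x \<otimes> y) [^] (Suc n choose Suc 0)" using step by simp
  also have "\<dots> = x [^] Suc n \<otimes> y [^] Suc n"
    using pow_mult_distrib[OF assms(4,2,3), of "Suc n"] by simp
  finally have "inv (lprod G (map (\<lambda>i. (?ts ! i) [^]\<^bsub>G\<^esub> (Suc n choose Suc i)) [0..<n]))
     \<otimes> lprod G (map (\<lambda>x. x [^]\<^bsub>G\<^esub> (Suc n)) [x,y]) = \<one>"
    using assms by (simp add: lprod_def)
  then have "petresco_list G [x,y] (Suc n) = ?ts @ [\<one>]"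
    by (simp add: Let_def)
  also have "\<dots> = (x \<otimes> y) # replicate (Suc n - 1) \<one>" using step
    by (cases n) (auto simp: replicate_append_same)
  finally show ?case .
qed

context
  fixes G :: "('a,'b) monoid_scheme" (structure) and pw :: "'a \<Rightarrow> 'k::{idom,ring_char_0} \<Rightarrow> 'a"
  assumes kg: "kgroup G pw"
begin

interpretation group G using kg by (simp add: kgroup_def)

lemma pw_closed[simp]: "x \<in> carrier G \<Longrightarrow> pw x a \<in> carrier G"
  using kg by (simp add: kgroup_def)

lemma pw_add: "x \<in> carrier G \<Longrightarrow> pw x a \<otimes> pw x b = pw x (a + b)"
  using kg by (simp add: kgroup_def)
lemma pw_pw: "x \<in> carrier G \<Longrightarrow> pw (pw x a) b = pw x (a * b)"
  using kg by (simp add: kgroup_def)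
lemma pw_conj: "x \<in> carrier G \<Longrightarrow> y \<in> carrier G \<Longrightarrow>
   pw (inv y \<otimes> x \<otimes> y) a = inv y \<otimes> pw x a \<otimes> y"
  using kg by (simp add: kgroup_def)

lemma pw_pet: "set xs \<subseteq> carrier G \<Longrightarrow> lprod G (map (\<lambda>x. pw x a) xs) =
        lprod G (map (\<lambda>i. pw (petresco_list G xs (nilclass G) ! i) (kbin a (Suc i)))
                     [0..<nilclass G])"
  using kg[unfolded kgroup_def, THEN conjunct2, THEN conjunct2, THEN conjunct2, THEN conjunct2,
      THEN conjunct2, THEN conjunct2, THEN conjunct2] by blast

lemma pw_zero: "x \<in> carrier G \<Longrightarrow> pw x 0 = \<one>"
proof -
  assume x: "x \<in> carrier G"
  have "pw x 0 \<otimes> pw x 0 = pw x 0" using pw_add[OF x, of 0 0] by simp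
  then have "pw x 0 \<otimes> pw x 0 = pw x 0 \<otimes> \<one>" using x by simp
  then show ?thesis using x by (metis pw_closed one_closed l_cancel)
qed

lemma pw_one_el[simp]: "pw \<one> b = \<one>"
proof -
  have "pw \<one> b = pw (pw \<one> 0) b" using pw_zero by simp
  also have "\<dots> = pw \<one> 0" using pw_pw[OF one_closed, of 0 b] by simp
  finally show ?thesis using pw_zero by simp
qed

lemma pw_comm:
  assumes x: "x \<in> carrier G" and y: "y \<in> carrier G" and c: "x \<otimes> y = y \<otimes> x"
  shows "pw (x \<otimes> y) a = pw x a \<otimes> pw y a"
proof (cases "nilclass G = 0")
  case True
  have "nilpotent G" using kg by (simp add: kgroup_def)
  then have "lcs G (nilclass G) = {\<one>}" unfolding nilclass_def nilpotent_def by (rule LeastI_ex)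
  then have "carrier G = {\<one>}" using True by simp
  then have "x = \<one>" "y = \<one>" using x y by auto
  then show ?thesis by simp
next
  case False
  have "lprod G (map (\<lambda>x. pw x a) [x,y]) =
        lprod G (map (\<lambda>i. pw (petresco_list G [x,y] (nilclass G) ! i) (kbin a (Suc i)))
                     [0..<nilclass G])"
    by (rule pw_pet) (use x y in auto)
  also have "\<dots> = pw (petresco_list G [x,y] (nilclass G) ! 0) (kbin a (Suc 0))"
    apply (rule lprod_first)
    using False petresco_comm[OF is_group x y c, of "nilclass G"] x y
    by (auto simp: nth_Cons')
  also have "\<dots> = pw (x \<otimes> y) a"
  proof -
    have "petresco_list G [x,y] (nilclass G) ! 0 = x \<otimes> y"
      using False petresco_comm[OF is_group x y c, of "nilclass G"] by simp
    then show ?thesis by (simp add: kbin_1)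
  qed
  finally have "lprod G [pw x a, pw y a] = pw (x \<otimes> y) a" by simp
  then show ?thesis using x y by (simp add: lprod_def)
qed

lemma pw_inv: "x \<in> carrier G \<Longrightarrow> pw (inv x) a = inv (pw x a)"
proof -
  assume x: "x \<in> carrier G"
  have "pw (inv x \<otimes> x) a = pw (inv x) a \<otimes> pw x a"
    by (rule pw_comm) (use x in auto)
  then have "pw (inv x) a \<otimes> pw x a = \<one>" using l_inv[OF x] by simp
  then show ?thesis using x by (simp add: inv_equality)
qed


lemma Z_sub: "zcenter G (carrier G) \<subseteq> carrier G"
  by (auto simp: zcenter_def)

lemmas Z_mult = Zg_mult[OF is_group]
lemmas Z_inv = Zg_inv[OF is_group]

lemma Z_comm: "x \<in> zcenter G (carrier G) \<Longrightarrow> y \<in> carrier G \<Longrightarrow> x \<otimes> y = y \<otimes> x"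
  unfolding zcenter_def by auto

lemma kgen_ks:
  assumes "S \<subseteq> carrier G"
  shows "ksubgroup G pw (kgen G pw S)" "S \<subseteq> kgen G pw S"
proof -
  let ?F = "{T. ksubgroup G pw T \<and> S \<subseteq> T}"
  have cF: "carrier G \<in> ?F" using assms subgroup_self unfolding ksubgroup_def by simp
  have sg: "subgroup T G" if "T \<in> ?F" for T using that unfolding ksubgroup_def by simp
  have kp: "pw x a \<in> T" if "T \<in> ?F" "x \<in> T" for T x a using that unfolding ksubgroup_def by simp
  have "subgroup (\<Inter>?F) G"
  proof (rule subgroupI)
    show "\<Inter>?F \<subseteq> carrier G" using cF by (rule Inter_lower)
    have "\<one> \<in> \<Inter>?F" by (rule InterI) (rule subgroup.one_closed, erule sg)
    then show "\<Inter>?F \<noteq> {}" by blast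
    show "inv a \<in> \<Inter>?F" if a: "a \<in> \<Inter>?F" for a
    proof (rule InterI)
      fix T assume T: "T \<in> ?F"
      then have "a \<in> T" using a by (rule InterD[rotated])
      then show "inv a \<in> T" using subgroup.m_inv_closed[OF sg[OF T]] by simp
    qed
    show "a \<otimes> b \<in> \<Inter>?F" if a: "a \<in> \<Inter>?F" and b: "b \<in> \<Inter>?F" for a b
    proof (rule InterI)
      fix T assume T: "T \<in> ?F"
      then have "a \<in> T" "b \<in> T" using a b by (auto dest: InterD[rotated])
      then show "a \<otimes> b \<in> T" using subgroup.m_closed[OF sg[OF T]] by simp
    qed
  qed
  moreover have "pw x a \<in> \<Inter>?F" if x: "x \<in> \<Inter>?F" for x a
  proof (rule InterI)
    fix T assume T: "T \<in> ?F"
    then have "x \<in> T" using x by (rule InterD[rotated])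
    then show "pw x a \<in> T" using kp[OF T] by simp
  qed
  ultimately show "ksubgroup G pw (kgen G pw S)" unfolding kgen_def ksubgroup_def by blast
  show "S \<subseteq> kgen G pw S" unfolding kgen_def by blast
qed

lemma kgen_mono: "S \<subseteq> S' \<Longrightarrow> kgen G pw S \<subseteq> kgen G pw S'"
  unfolding kgen_def by blast

abbreviation "NN \<equiv> kderived G pw (carrier G)"

lemma NN_ks: "ksubgroup G pw NN"
  unfolding kderived_def by (rule kgen_ks) (rule derived_set_in_carrier, simp)

lemma I_ks: "ksubgroup G pw (Icomp G pw)" and I_Z: "Icomp G pw \<subseteq> zcenter G (carrier G)"
proof -
  let ?I = "Icomp G pw"
  have N: "subgroup NN G" "\<And>x a. x \<in> NN \<Longrightarrow> pw x a \<in> NN"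
    using NN_ks by (auto simp: ksubgroup_def)
  show "?I \<subseteq> zcenter G (carrier G)" by (simp add: Icomp_def)
  have mem: "x \<in> ?I \<longleftrightarrow> x \<in> zcenter G (carrier G) \<and> (\<exists>a. a \<noteq> 0 \<and> pw x a \<in> NN)" for x
    using Z_sub by (auto simp: Icomp_def isol_def)
  have "subgroup ?I G"
  proof (rule subgroupI)
    show "?I \<subseteq> carrier G" using Z_sub by (auto simp: Icomp_def)
    have "\<one> \<in> ?I" unfolding mem
      using subgroup.one_closed[OF N(1)] by (auto simp: zcenter_def intro!: exI[of _ 1])
    then show "?I \<noteq> {}" by blast
    fix a assume "a \<in> ?I"
    then obtain \<alpha> where a: "a \<in> zcenter G (carrier G)" "\<alpha> \<noteq> 0" "pw a \<alpha> \<in> NN"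
      unfolding mem by blast
    have ac: "a \<in> carrier G" using a Z_sub by blast
    show "inv a \<in> ?I" unfolding mem
      using Z_inv[OF a(1)] a pw_inv[OF ac] subgroup.m_inv_closed[OF N(1)] by auto
    fix b assume "b \<in> ?I"
    then obtain \<beta> where b: "b \<in> zcenter G (carrier G)" "\<beta> \<noteq> 0" "pw b \<beta> \<in> NN"
      unfolding mem by blast
    have bc: "b \<in> carrier G" using b Z_sub by blast
    have "pw (a \<otimes> b) (\<alpha> * \<beta>) = pw a (\<alpha> * \<beta>) \<otimes> pw b (\<alpha> * \<beta>)"
      using pw_comm ac bc Z_comm[OF a(1) bc] by blast
    also have "\<dots> = pw (pw a \<alpha>) \<beta> \<otimes> pw (pw b \<beta>) \<alpha>"
      using pw_pw[OF ac, of \<alpha> \<beta>] pw_pw[OF bc, of \<beta> \<alpha>] by (simp add: mult.commute)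
    finally have "pw (a \<otimes> b) (\<alpha> * \<beta>) \<in> NN"
      using a b N subgroup.m_closed[OF N(1)] by simp
    then show "a \<otimes> b \<in> ?I" unfolding mem using Z_mult[OF a(1) b(1)] a(2) b(2) by (auto intro!: exI[of _ "\<alpha> * \<beta>"])
  qed
  moreover have "pw x c \<in> ?I" if x: "x \<in> ?I" for x c
  proof -
    obtain \<alpha> where a: "x \<in> zcenter G (carrier G)" "\<alpha> \<noteq> 0" "pw x \<alpha> \<in> NN"
      using x unfolding mem by blast
    have xc: "x \<in> carrier G" using a Z_sub by blast
    have "pw x c \<otimes> y = y \<otimes> pw x c" if y: "y \<in> carrier G" for y
    proof -
      have "inv y \<otimes> x \<otimes> y = inv y \<otimes> (y \<otimes> x)" using Z_comm[OF a(1) y] y xc by (simp add: m_assoc)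
      also have "\<dots> = x" using y xc by (simp add: m_assoc[symmetric])
      finally have "inv y \<otimes> x \<otimes> y = x" .
      then have "pw x c = inv y \<otimes> pw x c \<otimes> y"
        using pw_conj[OF xc y, of c] by simp
      then have "y \<otimes> pw x c = y \<otimes> (inv y \<otimes> pw x c \<otimes> y)" by simp
      also have "\<dots> = pw x c \<otimes> y" using y xc by (simp add: m_assoc[symmetric])
      finally show ?thesis by simp
    qed
    then have "pw x c \<in> zcenter G (carrier G)" using xc unfolding zcenter_def by auto
    moreover have "pw (pw x c) \<alpha> = pw (pw x \<alpha>) c"
      using pw_pw[OF xc, of c \<alpha>] pw_pw[OF xc, of \<alpha> c] by (simp add: mult.commute)
    ultimately show ?thesis unfolding mem using a N(2) by auto
  qed
  ultimately show "ksubgroup G pw ?I" by (simp add: ksubgroup_def)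
qed


lemma dec_uniq:
  assumes S1: "subgroup S1 G" and N: "subgroup N G" and XN: "S1 \<inter> N = {\<one>}"
    and x: "x \<in> S1" "x' \<in> S1" and n: "n \<in> N" "n' \<in> N" and eq: "x \<otimes> n = x' \<otimes> n'"
  shows "x = x' \<and> n = n'"
proof -
  have c: "x \<in> carrier G" "x' \<in> carrier G" "n \<in> carrier G" "n' \<in> carrier G"
    using x n subgroup.subset[OF S1] subgroup.subset[OF N] by auto
  have "inv x' \<otimes> x = inv x' \<otimes> (x \<otimes> n) \<otimes> inv n" using c by (simp add: m_assoc)
  also have "\<dots> = inv x' \<otimes> (x' \<otimes> n') \<otimes> inv n" by (simp only: eq)
  also have "\<dots> = n' \<otimes> inv n" using c by (simp add: m_assoc[symmetric])
  finally have e: "inv x' \<otimes> x = n' \<otimes> inv n" .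
  have "inv x' \<otimes> x \<in> S1" using x S1 by (simp add: subgroup.m_closed subgroup.m_inv_closed)
  moreover have "n' \<otimes> inv n \<in> N" using n N by (simp add: subgroup.m_closed subgroup.m_inv_closed)
  ultimately have "inv x' \<otimes> x \<in> S1 \<inter> N" using e by simp
  then have "inv x' \<otimes> x = \<one>" using XN by blast
  then have "x' \<otimes> (inv x' \<otimes> x) = x'" using c by simp
  then have xx: "x = x'" using c by (simp add: m_assoc[symmetric])
  then have "x \<otimes> n = x \<otimes> n'" using eq by simp
  then have "n = n'" using c by simp
  then show ?thesis using xx by simp
qed

lemma ks_sub: "ksubgroup G pw S1 \<Longrightarrow> subgroup S1 G" by (simp add: ksubgroup_def)
lemma ks_pw: "ksubgroup G pw S1 \<Longrightarrow> x \<in> S1 \<Longrightarrow> pw x a \<in> S1" by (simp add: ksubgroup_def)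

lemma kiso_same_compl:
  assumes S1: "ksubgroup G pw S1" and S2: "ksubgroup G pw S2" and N: "ksubgroup G pw N"
    and NZ: "N \<subseteq> zcenter G (carrier G)"
    and dX: "int_dprod G S1 N C" and dY: "int_dprod G S2 N C"
  shows "kiso (G\<lparr>carrier := S1\<rparr>) pw (G\<lparr>carrier := S2\<rparr>) pw"
proof -
  have Xs: "subgroup S1 G" and Ys: "subgroup S2 G" and Ns: "subgroup N G"
    using S1 S2 N by (auto simp: ksubgroup_def)
  have XN: "S1 \<inter> N = {\<one>}" and YN: "S2 \<inter> N = {\<one>}"
    and CX: "{a \<otimes> b | a b. a \<in> S1 \<and> b \<in> N} = C" and CY: "{a \<otimes> b | a b. a \<in> S2 \<and> b \<in> N} = C"
    using dX dY by (auto simp: int_dprod_def)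
  have XY: "{a \<otimes> b | a b. a \<in> S1 \<and> b \<in> N} = {a \<otimes> b | a b. a \<in> S2 \<and> b \<in> N}"
    using CX CY by simp
  have Xc: "x \<in> S1 \<Longrightarrow> x \<in> carrier G" for x using subgroup.subset[OF Xs] by blast
  have Yc: "x \<in> S2 \<Longrightarrow> x \<in> carrier G" for x using subgroup.subset[OF Ys] by blast
  have Nc: "x \<in> N \<Longrightarrow> x \<in> carrier G" for x using subgroup.subset[OF Ns] by blast
  define \<phi> where "\<phi> x = (SOME y. y \<in> S2 \<and> (\<exists>n\<in>N. x = y \<otimes> n))" for x
  have ex: "\<exists>y. y \<in> S2 \<and> (\<exists>n\<in>N. x = y \<otimes> n)" if x: "x \<in> S1" for x
  proof -
    have "x = x \<otimes> \<one>" using Xc[OF x] by simp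
    then have "x \<in> {a \<otimes> b | a b. a \<in> S2 \<and> b \<in> N}"
      using XY x subgroup.one_closed[OF Ns] by blast
    then show ?thesis by blast
  qed
  have phi: "\<phi> x \<in> S2 \<and> (\<exists>n\<in>N. x = \<phi> x \<otimes> n)" if x: "x \<in> S1" for x
    unfolding \<phi>_def by (rule someI_ex[OF ex[OF x]])
  have phi_eq: "\<phi> x = y" if x: "x \<in> S1" and y: "y \<in> S2" and n: "n \<in> N" and e: "x = y \<otimes> n" for x y n
  proof -
    obtain n' where n': "n' \<in> N" "x = \<phi> x \<otimes> n'" using phi[OF x] by blast
    have "\<phi> x \<otimes> n' = y \<otimes> n" by (simp only: n'(2)[symmetric] e[symmetric])
    then show ?thesis using dec_uniq[OF Ys Ns YN _ y n'(1) n] phi[OF x] by blast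
  qed
  have hom: "\<phi> (x1 \<otimes> x2) = \<phi> x1 \<otimes> \<phi> x2" if x1: "x1 \<in> S1" and x2: "x2 \<in> S1" for x1 x2
  proof -
    obtain n1 where n1: "n1 \<in> N" "x1 = \<phi> x1 \<otimes> n1" using phi[OF x1] by blast
    obtain n2 where n2: "n2 \<in> N" "x2 = \<phi> x2 \<otimes> n2" using phi[OF x2] by blast
    have y: "\<phi> x1 \<in> S2" "\<phi> x2 \<in> S2" using phi x1 x2 by auto
    have "x1 \<otimes> x2 = (\<phi> x1 \<otimes> n1) \<otimes> (\<phi> x2 \<otimes> n2)"
      using n1(2) n2(2) by (rule arg_cong2[where f="(\<otimes>)"])
    also have "\<dots> = \<phi> x1 \<otimes> (n1 \<otimes> \<phi> x2) \<otimes> n2"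
      using Yc[OF y(1)] Yc[OF y(2)] Nc[OF n1(1)] Nc[OF n2(1)] by (simp add: m_assoc)
    also have "\<dots> = \<phi> x1 \<otimes> (\<phi> x2 \<otimes> n1) \<otimes> n2"
      using Z_comm[of n1 "\<phi> x2"] NZ n1(1) Yc[OF y(2)] by auto
    also have "\<dots> = (\<phi> x1 \<otimes> \<phi> x2) \<otimes> (n1 \<otimes> n2)"
      using Yc[OF y(1)] Yc[OF y(2)] Nc[OF n1(1)] Nc[OF n2(1)] by (simp add: m_assoc)
    finally show ?thesis
      using phi_eq subgroup.m_closed[OF Xs x1 x2] subgroup.m_closed[OF Ys y]
        subgroup.m_closed[OF Ns n1(1) n2(1)] by blast
  qed
  have inj: "inj_on \<phi> S1"
  proof (rule inj_onI)
    fix x1 x2 assume x1: "x1 \<in> S1" and x2: "x2 \<in> S1" and e: "\<phi> x1 = \<phi> x2"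
    obtain n1 where n1: "n1 \<in> N" "x1 = \<phi> x1 \<otimes> n1" using phi[OF x1] by blast
    obtain n2 where n2: "n2 \<in> N" "x2 = \<phi> x2 \<otimes> n2" using phi[OF x2] by blast
    have y: "\<phi> x1 \<in> S2" using phi x1 by auto
    have y2: "\<phi> x2 \<in> S2" using phi x2 by auto
    have "x1 \<otimes> inv n1 = \<phi> x1 \<otimes> n1 \<otimes> inv n1" using n1(2) by (rule arg_cong[where f="\<lambda>z. z \<otimes> inv n1"])
    also have "\<dots> = \<phi> x1" using Yc[OF y] Nc[OF n1(1)] by (simp add: m_assoc)
    finally have "x1 \<otimes> inv n1 = \<phi> x1" .
    moreover have "x2 \<otimes> inv n2 = \<phi> x2 \<otimes> n2 \<otimes> inv n2" using n2(2) by (rule arg_cong[where f="\<lambda>z. z \<otimes> inv n2"])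
    moreover have "\<phi> x2 \<otimes> n2 \<otimes> inv n2 = \<phi> x2" using Yc[OF y2] Nc[OF n2(1)] by (simp add: m_assoc)
    ultimately have "x1 \<otimes> inv n1 = x2 \<otimes> inv n2" using e by simp
    then show "x1 = x2" using dec_uniq[OF Xs Ns XN x1 x2] subgroup.m_inv_closed[OF Ns] n1 n2 by blast
  qed
  have img: "\<phi> ` S1 = S2"
  proof
    show "\<phi> ` S1 \<subseteq> S2" using phi by auto
    show "S2 \<subseteq> \<phi> ` S1"
    proof
      fix y assume y: "y \<in> S2"
      have "y = y \<otimes> \<one>" using Yc[OF y] by simp
      then have "y \<in> {a \<otimes> b | a b. a \<in> S1 \<and> b \<in> N}"
        using XY y subgroup.one_closed[OF Ns] by blast
      then obtain x n where xn: "x \<in> S1" "n \<in> N" "y = x \<otimes> n" by blast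
      have "x = y \<otimes> inv n" using xn Xc[OF xn(1)] Nc[OF xn(2)] by (simp add: m_assoc)
      then have "\<phi> x = y" using phi_eq xn y subgroup.m_inv_closed[OF Ns] by blast
      then show "y \<in> \<phi> ` S1" using xn by blast
    qed
  qed
  have kc: "\<phi> (pw x a) = pw (\<phi> x) a" if x: "x \<in> S1" for x a
  proof -
    obtain n where n: "n \<in> N" "x = \<phi> x \<otimes> n" using phi[OF x] by blast
    have y: "\<phi> x \<in> S2" using phi x by auto
    have "pw x a = pw (\<phi> x \<otimes> n) a" using n(2) by (rule arg_cong)
    also have "\<dots> = pw (\<phi> x) a \<otimes> pw n a"
      using pw_comm[OF Yc[OF y] Nc[OF n(1)]] Z_comm[of n "\<phi> x"] NZ n(1) Yc[OF y] by auto
    finally have "pw x a = pw (\<phi> x) a \<otimes> pw n a" .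
    then show ?thesis using phi_eq ks_pw[OF S1 x] ks_pw[OF S2 y] ks_pw[OF N n(1)] by blast
  qed
  have inY: "\<phi> x \<in> S2" if "x \<in> S1" for x using phi[OF that] by blast
  have "\<phi> \<in> iso (G\<lparr>carrier := S1\<rparr>) (G\<lparr>carrier := S2\<rparr>)"
    unfolding iso_def hom_def using hom inj img inY by (auto simp: bij_betw_def)
  then show ?thesis unfolding kiso_def using kc by auto
qed


lemma kiso_prod:
  assumes H: "ksubgroup G pw H" and A: "ksubgroup G pw A"
    and AZ: "A \<subseteq> zcenter G (carrier G)" and d: "int_dprod G H A (carrier G)"
  shows "kiso G pw (G\<lparr>carrier := H\<rparr> \<times>\<times> G\<lparr>carrier := A\<rparr>) (dpow pw pw)"
proof -
  have Hs: "subgroup H G" and As: "subgroup A G" using H A by (auto simp: ksubgroup_def)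
  have HA: "H \<inter> A = {\<one>}" and CC: "{a \<otimes> b | a b. a \<in> H \<and> b \<in> A} = carrier G"
    using d by (auto simp: int_dprod_def)
  have Hc: "x \<in> H \<Longrightarrow> x \<in> carrier G" for x using subgroup.subset[OF Hs] by blast
  have Ac: "x \<in> A \<Longrightarrow> x \<in> carrier G" for x using subgroup.subset[OF As] by blast
  define \<psi> where "\<psi> g = (SOME p. p \<in> H \<times> A \<and> g = fst p \<otimes> snd p)" for g
  have psi: "\<psi> g \<in> H \<times> A \<and> g = fst (\<psi> g) \<otimes> snd (\<psi> g)" if g: "g \<in> carrier G" for g
  proof -
    obtain h a where "h \<in> H" "a \<in> A" "g = h \<otimes> a" using g CC by blast
    then have "\<exists>p. p \<in> H \<times> A \<and> g = fst p \<otimes> snd p" by (intro exI[of _ "(h,a)"]) auto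
    then show ?thesis unfolding \<psi>_def by (rule someI_ex)
  qed
  have psiE: "\<exists>h a. \<psi> g = (h, a) \<and> h \<in> H \<and> a \<in> A \<and> g = h \<otimes> a" if g: "g \<in> carrier G" for g
    using psi[OF g] by (metis mem_Sigma_iff prod.collapse)
  have psi_eq: "\<psi> g = (h, a)" if g: "g \<in> carrier G" and h: "h \<in> H" and a: "a \<in> A"
    and e: "g = h \<otimes> a" for g h a
  proof -
    obtain h' a' where p: "\<psi> g = (h', a')" "h' \<in> H" "a' \<in> A" "g = h' \<otimes> a'" using psiE[OF g] by blast
    have "h' \<otimes> a' = h \<otimes> a" using p(4) e by simp
    then show ?thesis using dec_uniq[OF Hs As HA p(2) h p(3) a] p(1) by simp
  qed
  have hom: "\<psi> (g1 \<otimes> g2) = \<psi> g1 \<otimes>\<^bsub>G\<lparr>carrier := H\<rparr> \<times>\<times> G\<lparr>carrier := A\<rparr>\<^esub> \<psi> g2"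
    if g1: "g1 \<in> carrier G" and g2: "g2 \<in> carrier G" for g1 g2
  proof -
    obtain h1 a1 where p1: "\<psi> g1 = (h1, a1)" "h1 \<in> H" "a1 \<in> A" "g1 = h1 \<otimes> a1" using psiE[OF g1] by blast
    obtain h2 a2 where p2: "\<psi> g2 = (h2, a2)" "h2 \<in> H" "a2 \<in> A" "g2 = h2 \<otimes> a2" using psiE[OF g2] by blast
    have c: "h1 \<in> carrier G" "h2 \<in> carrier G" "a1 \<in> carrier G" "a2 \<in> carrier G"
      using p1 p2 Hc Ac by auto
    have "g1 \<otimes> g2 = h1 \<otimes> (a1 \<otimes> h2) \<otimes> a2" using p1(4) p2(4) c by (simp add: m_assoc)
    also have "\<dots> = h1 \<otimes> (h2 \<otimes> a1) \<otimes> a2" using Z_comm[of a1 h2] AZ p1(3) c by auto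
    also have "\<dots> = (h1 \<otimes> h2) \<otimes> (a1 \<otimes> a2)" using c by (simp add: m_assoc)
    finally have "\<psi> (g1 \<otimes> g2) = (h1 \<otimes> h2, a1 \<otimes> a2)"
      using psi_eq[OF m_closed[OF g1 g2]] subgroup.m_closed[OF Hs p1(2) p2(2)]
        subgroup.m_closed[OF As p1(3) p2(3)] by blast
    then show ?thesis using p1(1) p2(1) by (simp add: DirProd_def)
  qed
  have inj: "inj_on \<psi> (carrier G)"
  proof (rule inj_onI)
    fix g1 g2 assume g1: "g1 \<in> carrier G" and g2: "g2 \<in> carrier G" and e: "\<psi> g1 = \<psi> g2"
    obtain h1 a1 where p1: "\<psi> g1 = (h1, a1)" "h1 \<in> H" "a1 \<in> A" "g1 = h1 \<otimes> a1" using psiE[OF g1] by blast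
    obtain h2 a2 where p2: "\<psi> g2 = (h2, a2)" "h2 \<in> H" "a2 \<in> A" "g2 = h2 \<otimes> a2" using psiE[OF g2] by blast
    show "g1 = g2" using p1 p2 e by simp
  qed
  have img: "\<psi> ` carrier G = H \<times> A"
  proof
    show "\<psi> ` carrier G \<subseteq> H \<times> A" using psi by blast
    show "H \<times> A \<subseteq> \<psi> ` carrier G"
    proof
      fix p assume p: "p \<in> H \<times> A"
      then obtain h a where ha: "p = (h, a)" "h \<in> H" "a \<in> A" by blast
      have "h \<otimes> a \<in> carrier G" using ha Hc Ac by simp
      moreover have "\<psi> (h \<otimes> a) = p" using psi_eq[OF calculation ha(2,3)] ha(1) by simp
      ultimately show "p \<in> \<psi> ` carrier G" by force
    qed
  qed
  have kc: "\<psi> (pw g b) = dpow pw pw (\<psi> g) b" if g: "g \<in> carrier G" for g b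
  proof -
    obtain h a where p: "\<psi> g = (h, a)" "h \<in> H" "a \<in> A" "g = h \<otimes> a" using psiE[OF g] by blast
    have c: "h \<in> carrier G" "a \<in> carrier G" using p Hc Ac by auto
    have "pw g b = pw h b \<otimes> pw a b"
      using p(4) pw_comm[OF c] Z_comm[of a h] AZ p(3) c by auto
    then have "\<psi> (pw g b) = (pw h b, pw a b)"
      using psi_eq[OF pw_closed[OF g]] ks_pw[OF H p(2)] ks_pw[OF A p(3)] by blast
    then show ?thesis using p(1) by (simp add: dpow_def)
  qed
  have "\<psi> \<in> iso G (G\<lparr>carrier := H\<rparr> \<times>\<times> G\<lparr>carrier := A\<rparr>)"
    unfolding iso_def hom_def using hom inj img
    by (auto simp: bij_betw_def DirProd_def simp del: psi_eq)
  then show ?thesis unfolding kiso_def using kc by auto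
qed

lemma F1:
  assumes "foundation_cond G pw H"
  shows "H \<inter> zcenter G (carrier G) \<subseteq> Icomp G pw"
proof
  fix x assume x: "x \<in> H \<inter> zcenter G (carrier G)"
  have Hs: "H \<subseteq> carrier G" using assms by (auto simp: foundation_cond_def ksubgroup_def subgroup_def)
  have "x \<in> zcenter G H" using x Hs unfolding zcenter_def by blast
  then have "x \<in> isol G pw H (kderived G pw H)" using assms by (auto simp: foundation_cond_def)
  then obtain a where a: "a \<noteq> 0" "pw x a \<in> kgen G pw (derived_set G H)"
    by (auto simp: isol_def kderived_def)
  have "derived_set G H \<subseteq> derived_set G (carrier G)" using Hs by blast
  then have "pw x a \<in> NN" using a kgen_mono unfolding kderived_def by blast
  then show "x \<in> Icomp G pw" using x a Hs unfolding Icomp_def isol_def by blast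
qed

lemma F2:
  assumes H: "foundation G pw H" and A: "addition G pw A"
  shows "int_dprod G H A (carrier G)"
proof -
  obtain B where B: "addition G pw B" and dB: "int_dprod G H B (carrier G)"
    using H by (auto simp: foundation_def)
  have fc: "foundation_cond G pw H" using H by (simp add: foundation_def)
  have Hk: "ksubgroup G pw H" using fc by (simp add: foundation_cond_def)
  have Hs: "subgroup H G" using Hk by (simp add: ksubgroup_def)
  have As: "subgroup A G" and AZ: "A \<subseteq> zcenter G (carrier G)"
    and AI: "A \<inter> Icomp G pw = {\<one>}" and ZAI: "{a \<otimes> b | a b. a \<in> A \<and> b \<in> Icomp G pw} = zcenter G (carrier G)"
    using A by (auto simp: addition_def ksubgroup_def int_dprod_def)
  have Bs: "subgroup B G" and BZ: "B \<subseteq> zcenter G (carrier G)"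
    and BI: "B \<inter> Icomp G pw = {\<one>}"
    using B by (auto simp: addition_def ksubgroup_def int_dprod_def)
  have HB: "{a \<otimes> b | a b. a \<in> H \<and> b \<in> B} = carrier G" using dB by (simp add: int_dprod_def)
  have Is: "subgroup (Icomp G pw) G" using I_ks by (simp add: ksubgroup_def)
  have Hc: "x \<in> H \<Longrightarrow> x \<in> carrier G" for x using subgroup.subset[OF Hs] by blast
  have Ac: "x \<in> A \<Longrightarrow> x \<in> carrier G" for x using subgroup.subset[OF As] by blast
  have Bc: "x \<in> B \<Longrightarrow> x \<in> carrier G" for x using subgroup.subset[OF Bs] by blast
  have Ic: "x \<in> Icomp G pw \<Longrightarrow> x \<in> carrier G" for x using subgroup.subset[OF Is] by blast
  have HZI: "H \<inter> zcenter G (carrier G) \<subseteq> Icomp G pw" by (rule F1[OF fc])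
  have IH: "Icomp G pw \<subseteq> H"
  proof
    fix z assume z: "z \<in> Icomp G pw"
    have zc: "z \<in> carrier G" using Ic z by blast
    then obtain h b where hb: "h \<in> H" "b \<in> B" "z = h \<otimes> b" using HB by blast
    have c: "h \<in> carrier G" "b \<in> carrier G" using hb Hc Bc by auto
    have "h = z \<otimes> inv b" using hb(3) c by (simp add: m_assoc)
    moreover have "z \<otimes> inv b \<in> zcenter G (carrier G)"
      using Z_mult[of z "inv b"] Z_inv[of b] z I_Z BZ hb(2) by blast
    ultimately have "h \<in> Icomp G pw" using HZI hb(1) by auto
    then have "inv h \<otimes> z \<in> Icomp G pw" using z Is by (simp add: subgroup.m_closed subgroup.m_inv_closed)
    moreover have "inv h \<otimes> z = b" using hb(3) c by (simp add: m_assoc[symmetric])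
    ultimately have "b = \<one>" using BI hb(2) by auto
    then show "z \<in> H" using hb c by simp
  qed
  have i1: "H \<inter> A = {\<one>}"
  proof
    show "H \<inter> A \<subseteq> {\<one>}" using HZI AZ AI by blast
    show "{\<one>} \<subseteq> H \<inter> A" using subgroup.one_closed[OF Hs] subgroup.one_closed[OF As] by blast
  qed
  have i2: "\<forall>h\<in>H. \<forall>a\<in>A. h \<otimes> a = a \<otimes> h" using Z_comm AZ Hc by (metis subsetD)
  have i3: "{h \<otimes> a | h a. h \<in> H \<and> a \<in> A} = carrier G"
  proof
    show "{h \<otimes> a | h a. h \<in> H \<and> a \<in> A} \<subseteq> carrier G" using Hc Ac by auto
    show "carrier G \<subseteq> {h \<otimes> a | h a. h \<in> H \<and> a \<in> A}"
    proof
      fix g assume g: "g \<in> carrier G"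
      then obtain h b where hb: "h \<in> H" "b \<in> B" "g = h \<otimes> b" using HB by blast
      have "b \<in> zcenter G (carrier G)" using BZ hb by blast
      then obtain a z where az: "a \<in> A" "z \<in> Icomp G pw" "b = a \<otimes> z" using ZAI by blast
      have c: "h \<in> carrier G" "a \<in> carrier G" "z \<in> carrier G" using hb az Hc Ac Ic by auto
      have "g = h \<otimes> (a \<otimes> z)" using hb az by simp
      also have "\<dots> = h \<otimes> (z \<otimes> a)" using Z_comm[of a z] AZ az c by auto
      also have "\<dots> = (h \<otimes> z) \<otimes> a" using c by (simp add: m_assoc)
      finally have "g = (h \<otimes> z) \<otimes> a" .
      moreover have "h \<otimes> z \<in> H" using IH az(2) hb(1) subgroup.m_closed[OF Hs] by blast
      ultimately show "g \<in> {h \<otimes> a | h a. h \<in> H \<and> a \<in> A}" using az(1) by blast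
    qed
  qed
  show ?thesis unfolding int_dprod_def using i1 i2 i3 by blast
qed

end

theorem mainTheorem10:
  fixes G :: "'a monoid" and pw :: "'a \<Rightarrow> 'k::{idom,ring_char_0} \<Rightarrow> 'a"
  assumes "binomial_domain TYPE('k)" and "pid TYPE('k)"
    and "kgroup G pw" and "fin_gen_kgroup G pw" and "regular G pw"
  shows "(\<forall>H G0. foundation G pw H \<and> addition G pw G0 \<longrightarrow>
            kiso G pw (G\<lparr>carrier := H\<rparr> \<times>\<times> G\<lparr>carrier := G0\<rparr>) (dpow pw pw))
       \<and> (\<forall>H1 H2. foundation G pw H1 \<and> foundation G pw H2 \<longrightarrow>
            kiso (G\<lparr>carrier := H1\<rparr>) pw (G\<lparr>carrier := H2\<rparr>) pw)
       \<and> (\<forall>A1 A2. addition G pw A1 \<and> addition G pw A2 \<longrightarrow>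
            kiso (G\<lparr>carrier := A1\<rparr>) pw (G\<lparr>carrier := A2\<rparr>) pw)"
proof (intro conjI allI impI)
  note kg = assms(3)
  fix H G0 assume a: "foundation G pw H \<and> addition G pw G0"
  show "kiso G pw (G\<lparr>carrier := H\<rparr> \<times>\<times> G\<lparr>carrier := G0\<rparr>) (dpow pw pw)"
    using kiso_prod[OF kg] F2[OF kg] a
    by (auto simp: foundation_def foundation_cond_def addition_def)
next
  note kg = assms(3)
  fix H1 H2 assume a: "foundation G pw H1 \<and> foundation G pw H2"
  then obtain B where B: "addition G pw B" using a by (auto simp: foundation_def)
  have d1: "int_dprod G H1 B (carrier G)" and d2: "int_dprod G H2 B (carrier G)"
    using F2[OF kg] a B by auto
  show "kiso (G\<lparr>carrier := H1\<rparr>) pw (G\<lparr>carrier := H2\<rparr>) pw"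
    using kiso_same_compl[OF kg _ _ _ _ d1 d2] a B
    by (auto simp: foundation_def foundation_cond_def addition_def)
next
  note kg = assms(3)
  fix A1 A2 assume a: "addition G pw A1 \<and> addition G pw A2"
  have d1: "int_dprod G A1 (Icomp G pw) (zcenter G (carrier G))"
    and d2: "int_dprod G A2 (Icomp G pw) (zcenter G (carrier G))"
    using a by (auto simp: addition_def)
  show "kiso (G\<lparr>carrier := A1\<rparr>) pw (G\<lparr>carrier := A2\<rparr>) pw"
    using kiso_same_compl[OF kg _ _ I_ks[OF kg] I_Z[OF kg] d1 d2] a
    by (auto simp: addition_def)
qed

end
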